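(* Let $\delta>0$ and $\nu\ge\frac32+\delta$, and let $K$ be the integral operator on $C_0^\infty(\mathbb R_+)$, $Ku(x)=\int_0^\infty k(x,y)u(y)\,dy$, with kernel \[ k(x,y)=\begin{cases}\frac1{2\nu}\left(\frac yx\right)^{\nu}(xy)^{1/2},&y\le x,\\ \frac1{2\nu}\left(\frac yx\right)^{-\nu}(xy)^{1/2},&x\le y.\end{cases} \] Then $X^{-2}\circ K$ defines a bounded operator on $L^2(0,\infty)$, and there is a constant $C>0$ depending only on $\delta$ such that \[ \|X^{-2}\circ K\|_{L^2\to L^2}\le\left(\nu^2-\tfrac94\right)^{-1},\quad\|(X\partial_x)\circ X^{-2}\circ K\|_{L^2\to L^2}\le\left(\nu-\tfrac32\right)^{-1},\quad\|(X\partial_x)^2\circ X^{-2}\circ K\|_{L^2\to L^2}\le C. \]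
   Context: $\mathbb R_+=(0,\infty)$ and $X$ denotes multiplication by $x$. *)

theory Defs
  imports "HOL-Analysis.Analysis"
begin

definition kern :: "real \<Rightarrow> real \<Rightarrow> real \<Rightarrow> real" where
  "kern \<nu> x y =
     (if y \<le> x then 1 / (2 * \<nu>) * (y / x) powr \<nu> * (x * y) powr (1/2)
      else 1 / (2 * \<nu>) * (y / x) powr (- \<nu>) * (x * y) powr (1/2))"

definition opK :: "real \<Rightarrow> (real \<Rightarrow> real) \<Rightarrow> real \<Rightarrow> real" where
  "opK \<nu> u x = (LINT y:{0<..}|lborel. kern \<nu> x y * u y)"

definition opT :: "real \<Rightarrow> (real \<Rightarrow> real) \<Rightarrow> real \<Rightarrow> real" where
  "opT \<nu> u x = inverse (x ^ 2) * opK \<nu> u x"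

definition euler :: "(real \<Rightarrow> real) \<Rightarrow> real \<Rightarrow> real" where
  "euler f x = x * deriv f x"

definition L2sq :: "(real \<Rightarrow> real) \<Rightarrow> ennreal" where
  "L2sq f = (\<integral>\<^sup>+ x\<in>{0<..}. ennreal ((f x)\<^sup>2) \<partial>lborel)"

definition test_fun :: "(real \<Rightarrow> real) \<Rightarrow> bool" where
  "test_fun u \<longleftrightarrow>
     (\<forall>n. \<forall>x>0. (deriv ^^ n) u differentiable at x) \<and>
     (\<exists>a b. 0 < a \<and> a \<le> b \<and> (\<forall>x. x \<notin> {a..b} \<longrightarrow> u x = 0))"

end

theory Submission
  imports Defs
begin


locale hsetup =
  fixes u :: "real \<Rightarrow> real" and \<nu> a b :: real
  assumes ucont: "\<And>x. isCont u x"
    and apos: "0 < a" and ab: "a < b"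
    and ulow: "\<And>y. y \<le> a \<Longrightarrow> u y = 0"
    and uhigh: "\<And>y. b \<le> y \<Longrightarrow> u y = 0"
    and nu: "3/2 < \<nu>"
begin

definition w1 :: "real \<Rightarrow> real" where "w1 y = y powr (1/2 + \<nu>) * u y"
definition w2 :: "real \<Rightarrow> real" where "w2 y = y powr (1/2 - \<nu>) * u y"
definition A :: "real \<Rightarrow> real" where "A x = integral {0..x} w1"
definition W2 :: real where "W2 = integral {0..b} w2"
definition B :: "real \<Rightarrow> real" where "B x = W2 - integral {0..x} w2"
definition P :: "real \<Rightarrow> real" where "P x = x powr (-3/2 - \<nu>) * A x"
definition Q :: "real \<Rightarrow> real" where "Q x = x powr (-3/2 + \<nu>) * B x"

lemma w_zero: "y \<le> a \<or> b \<le> y \<Longrightarrow> w1 y = 0 \<and> w2 y = 0"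
  using ulow uhigh by (auto simp: w1_def w2_def)

lemma isCont_zero_near:
  fixes f :: "real \<Rightarrow> real"
  assumes "\<And>y. y \<le> a \<Longrightarrow> f y = 0" "y < a"
  shows "isCont f y"
proof -
  have "eventually (\<lambda>z. z \<in> {..<a}) (nhds y)"
    using assms(2) by (intro eventually_nhds_in_open) auto
  then have "eventually (\<lambda>z. f z = (\<lambda>_. 0) z) (nhds y)"
    by eventually_elim (use assms(1) in auto)
  then have "isCont f y = isCont (\<lambda>_. 0::real) y" by (rule isCont_cong)
  then show ?thesis by simp
qed

lemma w1_cont: "isCont w1 y"
proof (cases "y < a")
  case True then show ?thesis by (intro isCont_zero_near) (use w_zero in auto)
next
  case False then have "y > 0" using apos by auto
  then show ?thesis unfolding w1_def
    by (intro continuous_intros ucont) auto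
qed

lemma w2_cont: "isCont w2 y"
proof (cases "y < a")
  case True then show ?thesis by (intro isCont_zero_near) (use w_zero in auto)
next
  case False then have "y > 0" using apos by auto
  then show ?thesis unfolding w2_def
    by (intro continuous_intros ucont) auto
qed

lemma w1_con: "continuous_on S w1" by (simp add: continuous_at_imp_continuous_on w1_cont)
lemma w2_con: "continuous_on S w2" by (simp add: continuous_at_imp_continuous_on w2_cont)

lemma int_deriv:
  fixes g :: "real \<Rightarrow> real"
  assumes "\<And>S. continuous_on S g" "0 < x"
  shows "((\<lambda>x. integral {0..x} g) has_real_derivative g x) (at x)"
proof -
  have "((\<lambda>x. integral {0..x} g) has_real_derivative g x) (at x within {0..x+1})"
    using assms by (intro integral_has_real_derivative) auto
  then show ?thesis
    using assms(2) by (subst (asm) at_within_interior[of x]) auto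
qed

lemma A_deriv: "0 < x \<Longrightarrow> (A has_real_derivative w1 x) (at x)"
  unfolding A_def[abs_def] by (rule int_deriv[OF w1_con])
lemma B_deriv: assumes x: "0 < x" shows "(B has_real_derivative - w2 x) (at x)"
proof -
  have "((\<lambda>x. W2 - integral {0..x} w2) has_real_derivative 0 - w2 x) (at x)"
    by (rule DERIV_diff[OF DERIV_const int_deriv[OF w2_con x]])
  then show ?thesis unfolding B_def[abs_def] by simp
qed

end


context hsetup begin
lemma int_w2_split: "0 \<le> x \<Longrightarrow> x \<le> d \<Longrightarrow> b \<le> d \<Longrightarrow> integral {x..d} w2 = B x"
proof -
  assume x: "0 \<le> x" "x \<le> d" "b \<le> d"
  have i: "\<And>s t. w2 integrable_on {s..t}"
    by (rule integrable_continuous_interval) (rule w2_con)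
  have 1: "integral {0..x} w2 + integral {x..d} w2 = integral {0..d} w2"
    by (rule Henstock_Kurzweil_Integration.integral_combine[where a=0 and c=x and b=d and f=w2]) (use x i in auto)
  have 2: "integral {0..b} w2 + integral {b..d} w2 = integral {0..d} w2"
    by (rule Henstock_Kurzweil_Integration.integral_combine[where a=0 and c=b and b=d and f=w2]) (use x i ab apos in auto)
  have 3: "integral {b..d} w2 = 0"
  proof -
    have "integral {b..d} w2 = integral {b..d} (\<lambda>_. 0::real)"
      by (rule integral_cong) (use w_zero in auto)
    then show ?thesis by simp
  qed
  show ?thesis unfolding B_def W2_def using 1 2 3 by linarith
qed
lemma B_zero: "b \<le> x \<Longrightarrow> B x = 0"
proof -
  assume "b \<le> x"
  then have "integral {x..x} w2 = B x" using apos ab by (intro int_w2_split) auto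
  then show ?thesis by simp
qed

lemma P_deriv: "0 < x \<Longrightarrow> (P has_real_derivative (-(3/2+\<nu>) * P x + u x) / x) (at x)"
proof -
  assume x: "0 < x"
  have D: "(P has_real_derivative (x powr (-3/2-\<nu>) * w1 x + (-3/2-\<nu>) * x powr (-3/2-\<nu>-1) * A x)) (at x)"
    unfolding P_def[abs_def] using x by (intro DERIV_mult' has_real_derivative_powr A_deriv) auto
  have e1: "x powr (-3/2-\<nu>-1) = x powr (-3/2-\<nu>) / x"
    using powr_diff[of x "-3/2-\<nu>" 1] x by simp
  have e2: "x powr (-3/2-\<nu>) * x powr (1/2+\<nu>) = 1 / x"
  proof -
    have "x powr (-3/2-\<nu>) * x powr (1/2+\<nu>) = x powr ((-3/2-\<nu>) + (1/2+\<nu>))"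
      by (rule powr_add[symmetric])
    also have "(-3/2-\<nu>) + (1/2+\<nu>) = (-1::real)" by simp
    finally show ?thesis using powr_neg_one[OF x] by simp
  qed
  have e3: "x powr (-3/2-\<nu>) * w1 x = u x / x"
    unfolding w1_def mult.assoc[symmetric] e2 by simp
  have "x powr (-3/2-\<nu>) * w1 x + (-3/2-\<nu>) * x powr (-3/2-\<nu>-1) * A x = (-(3/2+\<nu>) * P x + u x) / x"
    unfolding e3 e1 P_def using x by (simp add: field_simps)
  then show ?thesis using D by simp
qed

lemma Q_deriv: "0 < x \<Longrightarrow> (Q has_real_derivative ((\<nu>-3/2) * Q x - u x) / x) (at x)"
proof -
  assume x: "0 < x"
  have D: "(Q has_real_derivative (x powr (-3/2+\<nu>) * (- w2 x) + (-3/2+\<nu>) * x powr (-3/2+\<nu>-1) * B x)) (at x)"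
    unfolding Q_def[abs_def] using x by (intro DERIV_mult' has_real_derivative_powr B_deriv) auto
  have e1: "x powr (-3/2+\<nu>-1) = x powr (-3/2+\<nu>) / x"
    using powr_diff[of x "-3/2+\<nu>" 1] x by simp
  have e2: "x powr (-3/2+\<nu>) * x powr (1/2-\<nu>) = 1 / x"
  proof -
    have "x powr (-3/2+\<nu>) * x powr (1/2-\<nu>) = x powr ((-3/2+\<nu>) + (1/2-\<nu>))"
      by (rule powr_add[symmetric])
    also have "(-3/2+\<nu>) + (1/2-\<nu>) = (-1::real)" by simp
    finally show ?thesis using powr_neg_one[OF x] by simp
  qed
  have e3: "x powr (-3/2+\<nu>) * (- w2 x) = - u x / x"
    unfolding w2_def mult_minus_right mult.assoc[symmetric] e2 by simp
  have "x powr (-3/2+\<nu>) * (- w2 x) + (-3/2+\<nu>) * x powr (-3/2+\<nu>-1) * B x = ((\<nu>-3/2) * Q x - u x) / x"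
    unfolding e3 e1 Q_def using x by (simp add: field_simps)
  then show ?thesis using D by simp
qed

end


context hsetup begin

definition F0 :: "real \<Rightarrow> real" where "F0 x = (P x + Q x) / (2*\<nu>)"
definition F1 :: "real \<Rightarrow> real" where "F1 x = (-(\<nu>+3/2) * P x + (\<nu>-3/2) * Q x) / (2*\<nu>)"
definition F2 :: "real \<Rightarrow> real" where
  "F2 x = ((\<nu>+3/2)^2 * P x + (\<nu>-3/2)^2 * Q x) / (2*\<nu>) - u x"

lemma F0_deriv: assumes x: "0 < x" shows "(F0 has_real_derivative F1 x / x) (at x)"
proof -
  have D: "(F0 has_real_derivative ((-(3/2+\<nu>) * P x + u x) / x + ((\<nu>-3/2) * Q x - u x) / x) / (2*\<nu>)) (at x)"
    unfolding F0_def[abs_def] by (intro DERIV_cdivide DERIV_add P_deriv Q_deriv x)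
  have "((-(3/2+\<nu>) * P x + u x) / x + ((\<nu>-3/2) * Q x - u x) / x) / (2*\<nu>) = F1 x / x"
    unfolding F1_def using x nu by (simp add: field_simps)
  then show ?thesis using D by simp
qed

lemma F1_deriv: assumes x: "0 < x" shows "(F1 has_real_derivative F2 x / x) (at x)"
proof -
  have D: "(F1 has_real_derivative (-(\<nu>+3/2) * ((-(3/2+\<nu>) * P x + u x) / x) + (\<nu>-3/2) * (((\<nu>-3/2) * Q x - u x) / x)) / (2*\<nu>)) (at x)"
    unfolding F1_def[abs_def] by (intro DERIV_cdivide DERIV_add DERIV_cmult P_deriv Q_deriv x)
  have "(-(\<nu>+3/2) * ((-(3/2+\<nu>) * P x + u x) / x) + (\<nu>-3/2) * (((\<nu>-3/2) * Q x - u x) / x)) / (2*\<nu>) = F2 x / x"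
    unfolding F2_def using x nu by (simp add: field_simps power2_eq_square)
  then show ?thesis using D by simp
qed

lemma kern_eq:
  assumes x: "0 < x" and y: "0 < y"
  shows "kern \<nu> x y * u y = (if y \<le> x then x powr (1/2-\<nu>) / (2*\<nu>) * w1 y else x powr (1/2+\<nu>) / (2*\<nu>) * w2 y)"
proof (cases "y \<le> x")
  case True
  have k: "kern \<nu> x y = 1 / (2 * \<nu>) * (y powr \<nu> / x powr \<nu>) * (x powr (1/2) * y powr (1/2))"
    using True unfolding kern_def powr_divide powr_mult by simp
  have e1: "x powr (1/2-\<nu>) = x powr (1/2) / x powr \<nu>" by (rule powr_diff)
  have e2: "y powr (1/2+\<nu>) = y powr (1/2) * y powr \<nu>" by (rule powr_add)
  have p: "x powr \<nu> > 0" using x by simp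
  show ?thesis using True unfolding w1_def k e1 e2 using p nu by (simp add: field_simps)
next
  case False
  have k: "kern \<nu> x y = 1 / (2 * \<nu>) * (x powr \<nu> / y powr \<nu>) * (x powr (1/2) * y powr (1/2))"
    using False unfolding kern_def powr_minus powr_divide powr_mult by simp
  have e1: "y powr (1/2-\<nu>) = y powr (1/2) / y powr \<nu>" by (rule powr_diff)
  have e2: "x powr (1/2+\<nu>) = x powr (1/2) * x powr \<nu>" by (rule powr_add)
  have p: "y powr \<nu> > 0" using y by simp
  show ?thesis using False unfolding w2_def k e1 e2 using p nu by (simp add: field_simps)
qed

lemma opT_eq: assumes x: "0 < x" shows "opT \<nu> u x = F0 x"
proof -
  define d where "d = max x b"
  define k1 where "k1 = x powr (1/2-\<nu>) / (2*\<nu>)"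
  define k2 where "k2 = x powr (1/2+\<nu>) / (2*\<nu>)"
  define H where "H = (\<lambda>y. if y \<le> x then k1 * w1 y else k2 * w2 y)"
  have xd: "x \<le> d" "b \<le> d" "0 \<le> x" using x by (auto simp: d_def)
  have kx: "k1 * w1 x = k2 * w2 x"
    unfolding k1_def k2_def w1_def w2_def by (simp add: field_simps)
  have Hc: "continuous_on S H" for S
    unfolding H_def
    by (rule continuous_on_cases_le) (auto intro!: continuous_intros w1_con w2_con simp: kx)
  have eq: "indicator {0<..} y *\<^sub>R (kern \<nu> x y * u y) = indicator {0..d} y *\<^sub>R H y" for y
  proof -
    consider "y < 0" | "y = 0" | "0 < y" "y \<le> d" | "d < y" by linarith
    then show ?thesis
    proof cases
      case 1 then show ?thesis by (simp add: indicator_def)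
    next
      case 2 then show ?thesis using x w_zero[of 0] apos by (simp add: indicator_def H_def)
    next
      case 3 then show ?thesis using kern_eq[OF x, of y] by (simp add: indicator_def H_def k1_def k2_def)
    next
      case 4
      then have "u y = 0" using uhigh xd by auto
      then show ?thesis using 4 xd by (simp add: indicator_def)
    qed
  qed
  have "opK \<nu> u x = (LINT y:{0..d}|lborel. H y)"
    unfolding opK_def set_lebesgue_integral_def eq ..
  also have "\<dots> = integral {0..d} H"
    by (rule set_borel_integral_eq_integral(2)[OF borel_integrable_atLeastAtMost'[OF Hc]])
  also have "\<dots> = integral {0..x} H + integral {x..d} H"
    by (rule Henstock_Kurzweil_Integration.integral_combine[symmetric])
       (use xd in \<open>auto intro!: integrable_continuous_interval Hc\<close>)
  also have "integral {0..x} H = integral {0..x} (\<lambda>y. k1 * w1 y)"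
    by (rule integral_cong) (simp add: H_def)
  also have "integral {x..d} H = integral {x..d} (\<lambda>y. k2 * w2 y)"
    by (rule integral_cong) (auto simp: H_def kx)
  also have "integral {0..x} (\<lambda>y. k1 * w1 y) + integral {x..d} (\<lambda>y. k2 * w2 y) = k1 * A x + k2 * B x"
    using int_w2_split[OF xd(3,1,2)] by (simp add: A_def)
  finally have K: "opK \<nu> u x = k1 * A x + k2 * B x" .
  have e1: "x powr (1/2-\<nu>) = x powr (-3/2-\<nu>) * x^2"
  proof -
    have "x powr (1/2-\<nu>) = x powr ((-3/2-\<nu>) + 2)" by simp
    also have "\<dots> = x powr (-3/2-\<nu>) * x powr 2" by (rule powr_add)
    finally show ?thesis using x by simp
  qed
  have e2: "x powr (1/2+\<nu>) = x powr (-3/2+\<nu>) * x^2"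
  proof -
    have "x powr (1/2+\<nu>) = x powr ((-3/2+\<nu>) + 2)" by simp
    also have "\<dots> = x powr (-3/2+\<nu>) * x powr 2" by (rule powr_add)
    finally show ?thesis using x by simp
  qed
  show ?thesis unfolding opT_def K k1_def k2_def e1 e2 F0_def P_def Q_def
    using x nu by (simp add: field_simps)
qed

end


lemma hardy_gen:
  fixes G v :: "real \<Rightarrow> real" and l s t :: real
  assumes st: "0 < s" "s \<le> t"
    and dG: "\<And>x. x \<in> {s..t} \<Longrightarrow> (G has_real_derivative (-l * G x + v x) / x) (at x)"
    and vc: "continuous_on {s..t} v"
    and bd: "(l - 1/2) * (t * (G t)^2 - s * (G s)^2) \<ge> 0"
  shows "(l - 1/2)^2 * integral {s..t} (\<lambda>x. (G x)^2) \<le> integral {s..t} (\<lambda>x. (v x)^2)"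
proof -
  define m where "m = l - 1/2"
  have Gc: "continuous_on {s..t} G"
    by (rule continuous_at_imp_continuous_on) (use dG DERIV_isCont in blast)
  have iGG: "(\<lambda>x. (G x)^2) integrable_on {s..t}"
    by (intro integrable_continuous_interval continuous_intros Gc)
  have iGv: "(\<lambda>x. G x * v x) integrable_on {s..t}"
    by (intro integrable_continuous_interval continuous_intros Gc vc)
  have ivv: "(\<lambda>x. (v x)^2) integrable_on {s..t}"
    by (intro integrable_continuous_interval continuous_intros vc)
  define I1 where "I1 = integral {s..t} (\<lambda>x. (G x)^2)"
  define I2 where "I2 = integral {s..t} (\<lambda>x. G x * v x)"
  define I3 where "I3 = integral {s..t} (\<lambda>x. (v x)^2)"
  have der: "((\<lambda>x. x * (G x)^2) has_real_derivative (-2*m*(G x)^2 + 2*(G x * v x))) (at x)"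
    if x: "x \<in> {s..t}" for x
  proof -
    have xp: "0 < x" using x st by auto
    have d2: "((\<lambda>x. (G x)^2) has_real_derivative (of_nat 2 * (((-l * G x + v x) / x) * G x ^ (2 - Suc 0)))) (at x)"
      by (rule DERIV_power[OF dG[OF x]])
    have "((\<lambda>x. x * (G x)^2) has_real_derivative
            (x * (of_nat 2 * (((-l * G x + v x) / x) * G x ^ (2 - Suc 0))) + 1 * (G x)^2)) (at x)"
      by (rule DERIV_mult'[OF DERIV_ident d2])
    moreover have "x * (of_nat 2 * (((-l * G x + v x) / x) * G x ^ (2 - Suc 0))) + 1 * (G x)^2 = -2*m*(G x)^2 + 2*(G x * v x)"
      using xp by (simp add: m_def field_simps power2_eq_square)
    ultimately show ?thesis by simp
  qed
  have ftc: "((\<lambda>x. -2*m*(G x)^2 + 2*(G x * v x)) has_integral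
               (t * (G t)^2 - s * (G s)^2)) {s..t}"
    by (rule fundamental_theorem_of_calculus[OF st(2)])
       (use der in \<open>auto simp: has_real_derivative_iff_has_vector_derivative intro: has_vector_derivative_at_within\<close>)
  have "integral {s..t} (\<lambda>x. -2*m*(G x)^2 + 2*(G x * v x)) = -2*m*I1 + 2*I2"
  proof -
    have "integral {s..t} (\<lambda>x. -2*m*(G x)^2 + 2*(G x * v x)) = integral {s..t} (\<lambda>x. -2*m*(G x)^2) + integral {s..t} (\<lambda>x. 2*(G x * v x))"
      by (rule integral_add) (intro integrable_continuous_interval continuous_intros Gc vc)+
    then show ?thesis unfolding I1_def I2_def by simp
  qed
  then have E: "-2*m*I1 + 2*I2 = t * (G t)^2 - s * (G s)^2"
    using ftc integral_unique by metis
  have pt: "2*m*(G x * v x) \<le> m^2 * (G x)^2 + (v x)^2" for x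
  proof -
    have "0 \<le> (m * G x - v x)^2" by simp
    then show ?thesis by (simp add: power2_eq_square algebra_simps)
  qed
  have "integral {s..t} (\<lambda>x. 2*m*(G x * v x)) \<le> integral {s..t} (\<lambda>x. m^2 * (G x)^2 + (v x)^2)"
    by (rule integral_le) (auto intro!: integrable_continuous_interval continuous_intros Gc vc pt)
  also have "\<dots> = m^2 * I1 + I3"
  proof -
    have "integral {s..t} (\<lambda>x. m^2 * (G x)^2 + (v x)^2) = integral {s..t} (\<lambda>x. m^2 * (G x)^2) + integral {s..t} (\<lambda>x. (v x)^2)"
      by (rule integral_add) (intro integrable_continuous_interval continuous_intros Gc vc)+
    then show ?thesis unfolding I1_def I3_def by simp
  qed
  finally have L: "2*m*I2 \<le> m^2 * I1 + I3" unfolding I2_def by simp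
  have "m * (t * (G t)^2 - s * (G s)^2) \<ge> 0" using bd by (simp add: m_def)
  then have "m * (-2*m*I1 + 2*I2) \<ge> 0" using E by simp
  then have "2*m*I2 \<ge> 2*m^2*I1" by (simp add: algebra_simps power2_eq_square)
  with L have "m^2 * I1 \<le> I3" by linarith
  then show ?thesis by (simp add: m_def I1_def I3_def)
qed



context hsetup begin

lemma A_zero: "x \<le> a \<Longrightarrow> A x = 0"
proof -
  assume x: "x \<le> a"
  have "integral {0..x} w1 = integral {0..x} (\<lambda>_. 0::real)"
    by (rule integral_cong) (use w_zero x in auto)
  then show ?thesis by (simp add: A_def)
qed

lemma P_cont: "continuous_on S P" if "S \<subseteq> {0<..}" for S
  using that by (intro continuous_at_imp_continuous_on) (auto intro: DERIV_isCont P_deriv)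
lemma Q_cont: "continuous_on S Q" if "S \<subseteq> {0<..}" for S
  using that by (intro continuous_at_imp_continuous_on) (auto intro: DERIV_isCont Q_deriv)
lemma u_con: "continuous_on S u" for S
  by (simp add: continuous_at_imp_continuous_on ucont)

lemma win_P:
  assumes "0 < s" "s \<le> t"
  shows "(\<nu>+1)^2 * integral {min s a..max t b} (\<lambda>x. (P x)^2) \<le> integral {min s a..max t b} (\<lambda>x. (u x)^2)"
proof -
  have s0: "0 < min s a" "min s a \<le> max t b" using assms apos ab by auto
  have P0: "P (min s a) = 0" by (simp add: P_def A_zero)
  have "(3/2+\<nu> - 1/2)^2 * integral {min s a..max t b} (\<lambda>x. (P x)^2) \<le> integral {min s a..max t b} (\<lambda>x. (u x)^2)"
  proof (rule hardy_gen[OF s0])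
    fix x assume "x \<in> {min s a..max t b}"
    then have "0 < x" using s0 by auto
    then show "(P has_real_derivative (- (3/2+\<nu>) * P x + u x) / x) (at x)" by (rule P_deriv)
  next
    show "continuous_on {min s a..max t b} u" by (rule u_con)
  next
    show "0 \<le> (3/2+\<nu> - 1/2) * (max t b * (P (max t b))^2 - min s a * (P (min s a))^2)"
    proof -
      have "0 < max t b" using s0 by linarith
      then have m: "0 \<le> max t b * (P (max t b))^2" by simp
      show ?thesis using P0 m nu by simp
    qed
  qed
  then show ?thesis by (simp add: add.commute)
qed

lemma win_Q:
  assumes "0 < s" "s \<le> t"
  shows "(\<nu>-1)^2 * integral {min s a..max t b} (\<lambda>x. (Q x)^2) \<le> integral {min s a..max t b} (\<lambda>x. (u x)^2)"
proof -
  have s0: "0 < min s a" "min s a \<le> max t b" using assms apos ab by auto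
  have Q0: "Q (max t b) = 0" by (simp add: Q_def B_zero)
  have "(3/2-\<nu> - 1/2)^2 * integral {min s a..max t b} (\<lambda>x. (Q x)^2) \<le> integral {min s a..max t b} (\<lambda>x. (- u x)^2)"
  proof (rule hardy_gen[OF s0])
    fix x assume "x \<in> {min s a..max t b}"
    then have "0 < x" using s0 by auto
    then show "(Q has_real_derivative (- (3/2-\<nu>) * Q x + - u x) / x) (at x)"
      by (rule DERIV_cong[OF Q_deriv]) (simp add: algebra_simps)
  next
    show "continuous_on {min s a..max t b} (\<lambda>x. - u x)" by (intro continuous_intros u_con)
  next
    have "0 \<le> (\<nu> - 1) * (min s a * (Q (min s a))^2)" using s0 nu by simp
    then show "0 \<le> (3/2-\<nu> - 1/2) * (max t b * (Q (max t b))^2 - min s a * (Q (min s a))^2)"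
      using Q0 by (simp add: algebra_simps)
  qed
  moreover have "(3/2-\<nu> - 1/2)^2 = (\<nu>-1)^2" by (simp add: power2_eq_square algebra_simps)
  ultimately show ?thesis by simp
qed

lemma sq_split: "(x + y)^2 \<le> (1 + r) * x^2 + (1 + 1/r) * y^2" if "0 < r" for x y r :: real
proof -
  have "0 \<le> (r * x - y)^2 / r" using that by simp
  also have "(r * x - y)^2 / r = r * x^2 - 2*x*y + y^2 / r"
    using that by (simp add: power2_eq_square field_simps)
  finally show ?thesis using that by (simp add: power2_eq_square field_simps)
qed

lemma win_combo:
  assumes st: "0 < s" "s \<le> t" and al: "al \<noteq> 0" and be: "be \<noteq> 0"
  shows "integral {s..t} (\<lambda>x. (al * P x + be * Q x)^2)
          \<le> (\<bar>al\<bar>/(\<nu>+1) + \<bar>be\<bar>/(\<nu>-1))^2 * integral {min s a..max t b} (\<lambda>x. (u x)^2)"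
proof -
  define S where "S = {min s a..max t b}"
  have s0: "0 < min s a" "min s a \<le> max t b" using st apos ab by auto
  have Ssub: "S \<subseteq> {0<..}" using s0 by (auto simp: S_def)
  define p where "p = \<bar>al\<bar>/(\<nu>+1)"
  define q where "q = \<bar>be\<bar>/(\<nu>-1)"
  have pq: "0 < p" "0 < q" using al be nu by (auto simp: p_def q_def)
  define r where "r = q / p"
  have r: "0 < r" using pq by (simp add: r_def)
  define U where "U = integral S (\<lambda>x. (u x)^2)"
  define IP where "IP = integral S (\<lambda>x. (P x)^2)"
  define IQ where "IQ = integral S (\<lambda>x. (Q x)^2)"
  have hP: "(\<nu>+1)^2 * IP \<le> U" using win_P[OF st] by (simp add: IP_def U_def S_def)
  have hQ: "(\<nu>-1)^2 * IQ \<le> U" using win_Q[OF st] by (simp add: IQ_def U_def S_def)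
  have cP: "continuous_on S P" by (rule P_cont[OF Ssub])
  have cQ: "continuous_on S Q" by (rule Q_cont[OF Ssub])
  have "integral {s..t} (\<lambda>x. (al * P x + be * Q x)^2) \<le> integral S (\<lambda>x. (al * P x + be * Q x)^2)"
    by (rule integral_subset_le) (use st in \<open>auto simp: S_def intro!: integrable_continuous_interval continuous_intros continuous_on_subset[OF cP] continuous_on_subset[OF cQ]\<close>)
  also have "\<dots> \<le> integral S (\<lambda>x. (1 + r) * al^2 * (P x)^2 + (1 + 1/r) * be^2 * (Q x)^2)"
  proof (rule integral_le)
    show "(\<lambda>x. (al * P x + be * Q x)^2) integrable_on S"
      unfolding S_def by (intro integrable_continuous_interval continuous_intros cP[unfolded S_def] cQ[unfolded S_def])
    show "(\<lambda>x. (1 + r) * al^2 * (P x)^2 + (1 + 1/r) * be^2 * (Q x)^2) integrable_on S"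
      unfolding S_def by (intro integrable_continuous_interval continuous_intros cP[unfolded S_def] cQ[unfolded S_def])
    fix x
    show "(al * P x + be * Q x)^2 \<le> (1 + r) * al^2 * (P x)^2 + (1 + 1/r) * be^2 * (Q x)^2"
      using sq_split[OF r, of "al * P x" "be * Q x"] by (simp add: power_mult_distrib)
  qed
  also have "\<dots> = (1 + r) * al^2 * IP + (1 + 1/r) * be^2 * IQ"
  proof -
    have "integral S (\<lambda>x. (1 + r) * al^2 * (P x)^2 + (1 + 1/r) * be^2 * (Q x)^2)
        = integral S (\<lambda>x. (1 + r) * al^2 * (P x)^2) + integral S (\<lambda>x. (1 + 1/r) * be^2 * (Q x)^2)"
      unfolding S_def by (rule integral_add) (intro integrable_continuous_interval continuous_intros cP[unfolded S_def] cQ[unfolded S_def])+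
    then show ?thesis by (simp add: IP_def IQ_def)
  qed
  also have "\<dots> \<le> (1 + r) * p^2 * U + (1 + 1/r) * q^2 * U"
  proof -
    have "al^2 * IP \<le> p^2 * U"
    proof -
      have "al^2 * IP = p^2 * ((\<nu>+1)^2 * IP)"
        using nu by (simp add: p_def power_divide field_simps)
      also have "\<dots> \<le> p^2 * U" using hP by (intro mult_left_mono) auto
      finally show ?thesis .
    qed
    moreover have "be^2 * IQ \<le> q^2 * U"
    proof -
      have "be^2 * IQ = q^2 * ((\<nu>-1)^2 * IQ)"
        using nu by (simp add: q_def power_divide field_simps)
      also have "\<dots> \<le> q^2 * U" using hQ by (intro mult_left_mono) auto
      finally show ?thesis .
    qed
    ultimately show ?thesis using r
      by (smt (verit) mult.assoc mult_left_mono divide_pos_pos)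
  qed
  also have "\<dots> = (p + q)^2 * U"
    using pq by (simp add: r_def power2_eq_square field_simps)
  finally show ?thesis by (simp add: p_def q_def U_def S_def)
qed

end


lemma L2_window:
  fixes F :: "real \<Rightarrow> real" and Bd :: ennreal
  assumes cont: "continuous_on {0<..} F"
    and win: "\<And>s t. 0 < s \<Longrightarrow> s \<le> t \<Longrightarrow> ennreal (integral {s..t} (\<lambda>x. (F x)^2)) \<le> Bd"
  shows "L2sq F \<le> Bd"
proof -
  define W where "W n = {inverse (real (Suc n)) .. real (Suc n)}" for n
  define f where "f n x = ennreal ((F x)^2) * indicator (W n) x" for n x
  have Wsub: "W n \<subseteq> {0<..}" for n
  proof
    fix x assume "x \<in> W n"
    then have "inverse (1 + real n) \<le> x" by (simp add: W_def)
    moreover have "0 < inverse (1 + real n)" by simp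
    ultimately have "0 < x" by linarith
    then show "x \<in> {0<..}" by simp
  qed
  have cW: "continuous_on (W n) F" for n by (rule continuous_on_subset[OF cont Wsub])
  have Wb: "W n \<in> sets borel" for n by (simp add: W_def)
  have Wmono: "W n \<subseteq> W (Suc n)" for n
  proof -
    have "inverse (real (Suc (Suc n))) \<le> inverse (real (Suc n))"
      by (intro le_imp_inverse_le) auto
    then show ?thesis by (auto simp: W_def)
  qed
  have inc: "incseq f"
  proof (rule incseq_SucI, rule le_funI)
    fix n x
    show "f n x \<le> f (Suc n) x"
      using Wmono[of n] by (auto simp: f_def indicator_def)
  qed
  have meas: "f n \<in> borel_measurable lborel" for n
  proof -
    have "(\<lambda>x. indicator (W n) x *\<^sub>R (F x)^2) \<in> borel_measurable borel"
      by (rule borel_measurable_continuous_on_indicator[OF Wb]) (intro continuous_intros cW)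
    then have "(\<lambda>x. ennreal (indicator (W n) x *\<^sub>R (F x)^2)) \<in> borel_measurable borel"
      by measurable
    moreover have "f n = (\<lambda>x. ennreal (indicator (W n) x *\<^sub>R (F x)^2))"
      by (auto simp: f_def indicator_def fun_eq_iff)
    ultimately show ?thesis by simp
  qed
  have sup: "(SUP n. f n x) = ennreal ((F x)^2) * indicator {0<..} x" for x
  proof (rule antisym)
    show "(SUP n. f n x) \<le> ennreal ((F x)^2) * indicator {0<..} x"
      by (rule SUP_least) (use Wsub in \<open>auto simp: f_def indicator_def\<close>)
  next
    show "ennreal ((F x)^2) * indicator {0<..} x \<le> (SUP n. f n x)"
    proof (cases "0 < x")
      case False then show ?thesis by (simp add: indicator_def)
    next
      case True
      obtain n1 :: nat where n1: "inverse x < real n1" using reals_Archimedean2 by blast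
      obtain n2 :: nat where n2: "x < real n2" using reals_Archimedean2 by blast
      define n where "n = n1 + n2"
      have "inverse (real (Suc n)) \<le> x"
      proof -
        have "inverse x < real (Suc n)" using n1 by (simp add: n_def)
        then have "inverse (real (Suc n)) < inverse (inverse x)"
          using True by (intro less_imp_inverse_less) auto
        then show ?thesis by simp
      qed
      moreover have "x \<le> real (Suc n)" using n2 by (simp add: n_def)
      ultimately have "x \<in> W n" by (simp add: W_def)
      then have "ennreal ((F x)^2) * indicator {0<..} x = f n x"
        using True by (simp add: f_def indicator_def)
      then show ?thesis by (metis SUP_upper UNIV_I)
    qed
  qed
  have "L2sq F = (\<integral>\<^sup>+ x. (SUP n. f n x) \<partial>lborel)"
    unfolding L2sq_def sup ..
  also have "\<dots> = (SUP n. integral\<^sup>N lborel (f n))"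
    by (rule nn_integral_monotone_convergence_SUP[OF inc meas])
  also have "\<dots> \<le> Bd"
  proof (rule SUP_least)
    fix n
    have int: "((\<lambda>x. (F x)^2) has_integral integral (W n) (\<lambda>x. (F x)^2)) (W n)"
    proof (rule integrable_integral)
      have "continuous_on (W n) (\<lambda>x. (F x)^2)" by (intro continuous_intros cW)
      then show "(\<lambda>x. (F x)^2) integrable_on W n"
        unfolding W_def by (rule integrable_continuous_interval)
    qed
    have "integral\<^sup>N lborel (f n) = ennreal (integral (W n) (\<lambda>x. (F x)^2))"
      unfolding f_def by (rule nn_integral_has_integral_lebesgue'[OF _ int]) simp
    also have "\<dots> \<le> Bd" unfolding W_def
    proof (rule win)
      show "0 < inverse (real (Suc n))" by simp
      have "inverse (real (Suc n)) \<le> 1" by (simp add: inverse_le_1_iff)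
      moreover have "1 \<le> real (Suc n)" by simp
      ultimately show "inverse (real (Suc n)) \<le> real (Suc n)" by linarith
    qed
    finally show "integral\<^sup>N lborel (f n) \<le> Bd" .
  qed
  finally show ?thesis .
qed



context hsetup begin

lemma u_window:
  assumes "0 < s" "s \<le> t"
  shows "ennreal (integral {s..t} (\<lambda>x. (u x)^2)) \<le> L2sq u"
proof -
  have int: "((\<lambda>x. (u x)^2) has_integral integral {s..t} (\<lambda>x. (u x)^2)) {s..t}"
    by (intro integrable_integral integrable_continuous_interval continuous_intros u_con)
  have "ennreal (integral {s..t} (\<lambda>x. (u x)^2)) = (\<integral>\<^sup>+ x. ennreal ((u x)^2) * indicator {s..t} x \<partial>lborel)"
    by (rule nn_integral_has_integral_lebesgue'[OF _ int, symmetric]) simp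
  also have "\<dots> \<le> L2sq u"
    unfolding L2sq_def
    by (rule nn_integral_mono) (use assms in \<open>auto simp: indicator_def\<close>)
  finally show ?thesis .
qed

lemma U0_nonneg: "0 \<le> integral {s..t} (\<lambda>x. (u x)^2)"
  by (rule integral_nonneg) (auto intro: integrable_continuous_interval continuous_intros u_con)

lemma const_F0: "(\<bar>1/(2*\<nu>)\<bar>/(\<nu>+1) + \<bar>1/(2*\<nu>)\<bar>/(\<nu>-1))^2 \<le> (inverse (\<nu>^2 - 9/4))^2"
proof -
  have h0: "3/2 * (3/2) < \<nu>*\<nu>" by (rule mult_strict_mono) (use nu in auto)
  have h: "9/4 < \<nu>^2" using h0 by (simp add: power2_eq_square)
  have n: "0 < \<nu>" "0 < \<nu> - 1" "0 < \<nu> + 1" "0 < \<nu>^2 - 1" "0 < \<nu>^2 - 9/4" using nu h by auto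
  have e: "\<bar>1/(2*\<nu>)\<bar>/(\<nu>+1) + \<bar>1/(2*\<nu>)\<bar>/(\<nu>-1) = 1 / (\<nu>^2 - 1)"
    using n by (simp add: field_simps power2_eq_square)
  have "1 / (\<nu>^2 - 1) \<le> inverse (\<nu>^2 - 9/4)"
    using n by (simp add: inverse_eq_divide frac_le)
  moreover have "0 \<le> 1 / (\<nu>^2 - 1)" using n by simp
  ultimately show ?thesis unfolding e by (rule power_mono)
qed

lemma half_sum: "0 < e \<Longrightarrow> 1/(2*e) + 1/(2*e) = inverse (e::real)"
  by (simp add: field_simps)

lemma const_F1: "(\<bar>-(\<nu>+3/2)/(2*\<nu>)\<bar>/(\<nu>+1) + \<bar>(\<nu>-3/2)/(2*\<nu>)\<bar>/(\<nu>-1))^2 \<le> (inverse (\<nu> - 3/2))^2"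
proof -
  have n: "0 < \<nu>" "0 < \<nu> - 1" "0 < \<nu> + 1" "0 < \<nu> - 3/2" "0 < \<nu> + 3/2" using nu by auto
  have a1: "\<bar>-(\<nu>+3/2)/(2*\<nu>)\<bar>/(\<nu>+1) = (\<nu>+3/2)/(2*\<nu>*(\<nu>+1))"
    using n by simp
  have a2: "\<bar>(\<nu>-3/2)/(2*\<nu>)\<bar>/(\<nu>-1) = (\<nu>-3/2)/(2*\<nu>*(\<nu>-1))"
    using n by simp
  have polyP: "(\<nu>+3/2)*(2*(\<nu>-3/2)) - 1*(2*\<nu>*(\<nu>+1)) \<le> 0"
    using n by (simp add: algebra_simps)
  have polyQ: "(\<nu>-3/2)*(2*(\<nu>-3/2)) - 1*(2*\<nu>*(\<nu>-1)) \<le> 0"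
    using n by (simp add: algebra_simps)
  have p: "(\<nu>+3/2)/(2*\<nu>*(\<nu>+1)) \<le> 1/(2*(\<nu>-3/2))"
    using polyP n by (subst frac_le_eq) (auto intro!: divide_nonpos_pos)
  have q: "(\<nu>-3/2)/(2*\<nu>*(\<nu>-1)) \<le> 1/(2*(\<nu>-3/2))"
    using polyQ n by (subst frac_le_eq) (auto intro!: divide_nonpos_pos)
  have s: "1/(2*(\<nu>-3/2)) + 1/(2*(\<nu>-3/2)) = inverse (\<nu> - 3/2)"
    using half_sum[OF n(4)] .
  have "(\<nu>+3/2)/(2*\<nu>*(\<nu>+1)) + (\<nu>-3/2)/(2*\<nu>*(\<nu>-1)) \<le> inverse (\<nu> - 3/2)"
    using p q s by linarith
  moreover have "0 \<le> (\<nu>+3/2)/(2*\<nu>*(\<nu>+1)) + (\<nu>-3/2)/(2*\<nu>*(\<nu>-1))"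
    using n by (intro add_nonneg_nonneg divide_nonneg_pos) auto
  ultimately show ?thesis unfolding a1 a2 by (rule power_mono)
qed

end


lemma L2sq_cong: "(\<And>x. 0 < x \<Longrightarrow> f x = g x) \<Longrightarrow> L2sq f = L2sq g"
  unfolding L2sq_def by (rule nn_integral_cong) (auto simp: indicator_def)

context hsetup begin

lemma conv:
  assumes "0 < s" "s \<le> t" "0 \<le> K" "I \<le> K * integral {min s a..max t b} (\<lambda>x. (u x)^2)"
  shows "ennreal I \<le> ennreal K * L2sq u"
proof -
  have s0: "0 < min s a" "min s a \<le> max t b" using assms apos ab by auto
  have "ennreal I \<le> ennreal (K * integral {min s a..max t b} (\<lambda>x. (u x)^2))"
    using assms(4) by (rule ennreal_leI)
  also have "\<dots> = ennreal K * ennreal (integral {min s a..max t b} (\<lambda>x. (u x)^2))"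
    using assms(3) U0_nonneg by (simp add: ennreal_mult)
  also have "\<dots> \<le> ennreal K * L2sq u"
    by (intro mult_left_mono u_window[OF s0]) auto
  finally show ?thesis .
qed

lemma F0_eq: "F0 = (\<lambda>x. (1/(2*\<nu>)) * P x + (1/(2*\<nu>)) * Q x)"
  by (auto simp: F0_def fun_eq_iff add_divide_distrib)
lemma F1_eq: "F1 = (\<lambda>x. (-(\<nu>+3/2)/(2*\<nu>)) * P x + ((\<nu>-3/2)/(2*\<nu>)) * Q x)"
  by (auto simp: F1_def fun_eq_iff add_divide_distrib)

lemma F0_cont: "continuous_on {0<..} F0"
  unfolding F0_eq by (intro continuous_intros P_cont Q_cont) auto
lemma F1_cont: "continuous_on {0<..} F1"
  unfolding F1_eq by (intro continuous_intros P_cont Q_cont) auto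
lemma F2_cont: "continuous_on {0<..} F2"
  unfolding F2_def using nu by (intro continuous_intros P_cont Q_cont u_con) auto

definition K0 where "K0 = (inverse (\<nu>^2 - 9/4))^2"
definition K1 where "K1 = (inverse (\<nu> - 3/2))^2"

lemma win_F0: "0 < s \<Longrightarrow> s \<le> t \<Longrightarrow> integral {s..t} (\<lambda>x. (F0 x)^2) \<le> K0 * integral {min s a..max t b} (\<lambda>x. (u x)^2)"
proof -
  assume st: "0 < s" "s \<le> t"
  have "integral {s..t} (\<lambda>x. (F0 x)^2) \<le> (\<bar>1/(2*\<nu>)\<bar>/(\<nu>+1) + \<bar>1/(2*\<nu>)\<bar>/(\<nu>-1))^2 * integral {min s a..max t b} (\<lambda>x. (u x)^2)"
    unfolding F0_eq by (rule win_combo[OF st]) (use nu in auto)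
  also have "\<dots> \<le> K0 * integral {min s a..max t b} (\<lambda>x. (u x)^2)"
    unfolding K0_def by (intro mult_right_mono const_F0 U0_nonneg)
  finally show ?thesis .
qed

lemma win_F1: "0 < s \<Longrightarrow> s \<le> t \<Longrightarrow> integral {s..t} (\<lambda>x. (F1 x)^2) \<le> K1 * integral {min s a..max t b} (\<lambda>x. (u x)^2)"
proof -
  assume st: "0 < s" "s \<le> t"
  have "integral {s..t} (\<lambda>x. (F1 x)^2) \<le> (\<bar>-(\<nu>+3/2)/(2*\<nu>)\<bar>/(\<nu>+1) + \<bar>(\<nu>-3/2)/(2*\<nu>)\<bar>/(\<nu>-1))^2 * integral {min s a..max t b} (\<lambda>x. (u x)^2)"
    unfolding F1_eq by (rule win_combo[OF st]) (use nu in auto)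
  also have "\<dots> \<le> K1 * integral {min s a..max t b} (\<lambda>x. (u x)^2)"
    unfolding K1_def by (intro mult_right_mono const_F1 U0_nonneg)
  finally show ?thesis .
qed

lemma F2_eq: "F2 x = (\<nu>^2 - 9/4) * F0 x + (-3) * F1 x + - u x"
  using nu by (simp add: F0_def F1_def F2_def field_simps power2_eq_square)

lemma sq3: "(p + q + r)^2 \<le> 3 * p^2 + 3 * q^2 + 3 * r^2" for p q r :: real
proof -
  have "0 \<le> (p - q)^2 + (q - r)^2 + (p - r)^2" by simp
  then show ?thesis by (simp add: power2_eq_square algebra_simps)
qed

lemma win_F2: "0 < s \<Longrightarrow> s \<le> t \<Longrightarrow> integral {s..t} (\<lambda>x. (F2 x)^2) \<le> (6 + 27 * K1) * integral {min s a..max t b} (\<lambda>x. (u x)^2)"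
proof -
  assume st: "0 < s" "s \<le> t"
  define U where "U = integral {min s a..max t b} (\<lambda>x. (u x)^2)"
  define c where "c = \<nu>^2 - 9/4"
  have sub: "{s..t} \<subseteq> {0<..}" using st by auto
  have c0: "continuous_on {s..t} F0" by (rule continuous_on_subset[OF F0_cont sub])
  have c1: "continuous_on {s..t} F1" by (rule continuous_on_subset[OF F1_cont sub])
  have cu: "continuous_on {s..t} u" by (rule u_con)
  have "integral {s..t} (\<lambda>x. (F2 x)^2) \<le> integral {s..t} (\<lambda>x. 3 * (c * F0 x)^2 + 3 * ((-3) * F1 x)^2 + 3 * (- u x)^2)"
  proof (rule integral_le)
    show "(\<lambda>x. (F2 x)^2) integrable_on {s..t}"
      unfolding F2_eq[abs_def] by (intro integrable_continuous_interval continuous_intros c0 c1 cu)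
    show "(\<lambda>x. 3 * (c * F0 x)^2 + 3 * ((-3) * F1 x)^2 + 3 * (- u x)^2) integrable_on {s..t}"
      by (intro integrable_continuous_interval continuous_intros c0 c1 cu)
    fix x show "(F2 x)^2 \<le> 3 * (c * F0 x)^2 + 3 * ((-3) * F1 x)^2 + 3 * (- u x)^2"
      unfolding F2_eq c_def by (rule sq3)
  qed
  also have "\<dots> = 3 * c^2 * integral {s..t} (\<lambda>x. (F0 x)^2) + 27 * integral {s..t} (\<lambda>x. (F1 x)^2) + 3 * integral {s..t} (\<lambda>x. (u x)^2)"
  proof -
    have i0: "(\<lambda>x. 3 * (c * F0 x)^2) integrable_on {s..t}" by (intro integrable_continuous_interval continuous_intros c0)
    have i1: "(\<lambda>x. 3 * ((-3) * F1 x)^2) integrable_on {s..t}" by (intro integrable_continuous_interval continuous_intros c1)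
    have i2: "(\<lambda>x. 3 * (- u x)^2) integrable_on {s..t}" by (intro integrable_continuous_interval continuous_intros cu)
    have "integral {s..t} (\<lambda>x. 3 * (c * F0 x)^2 + 3 * ((-3) * F1 x)^2 + 3 * (- u x)^2)
        = integral {s..t} (\<lambda>x. 3 * (c * F0 x)^2) + integral {s..t} (\<lambda>x. 3 * ((-3) * F1 x)^2) + integral {s..t} (\<lambda>x. 3 * (- u x)^2)"
      using i0 i1 i2 by (simp add: integral_add integrable_add)
    then show ?thesis by (simp add: power_mult_distrib mult.assoc)
  qed
  also have "\<dots> \<le> 3 * 1 * U + 27 * (K1 * U) + 3 * U"
  proof -
    have h0: "3/2 * (3/2) < \<nu>*\<nu>" by (rule mult_strict_mono) (use nu in auto)
    have cpos: "c \<noteq> 0" unfolding c_def using h0 by (simp add: power2_eq_square)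
    have cK: "c^2 * K0 = 1"
      unfolding K0_def c_def[symmetric] using cpos by (simp add: power_inverse)
    have a0: "c^2 * integral {s..t} (\<lambda>x. (F0 x)^2) \<le> c^2 * (K0 * U)"
      using win_F0[OF st] by (intro mult_left_mono) (auto simp: U_def)
    have "c^2 * (K0 * U) = U" using cK by (simp add: mult.assoc[symmetric])
    with a0 have a: "c^2 * integral {s..t} (\<lambda>x. (F0 x)^2) \<le> U" by simp
    have b: "integral {s..t} (\<lambda>x. (F1 x)^2) \<le> K1 * U" using win_F1[OF st] by (simp add: U_def)
    have d: "integral {s..t} (\<lambda>x. (u x)^2) \<le> U"
      unfolding U_def
      by (rule integral_subset_le) (auto intro!: integrable_continuous_interval continuous_intros u_con)
    show ?thesis using a b d by simp
  qed
  also have "\<dots> = (6 + 27 * K1) * U" by (simp add: algebra_simps)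
  finally show ?thesis by (simp add: U_def)
qed

lemma K0_nonneg: "0 \<le> K0" by (simp add: K0_def)
lemma K1_nonneg: "0 \<le> K1" by (simp add: K1_def)

lemma L2_F0: "L2sq F0 \<le> ennreal K0 * L2sq u"
  by (rule L2_window[OF F0_cont], rule conv) (use K0_nonneg in \<open>auto intro: win_F0\<close>)
lemma L2_F1: "L2sq F1 \<le> ennreal K1 * L2sq u"
  by (rule L2_window[OF F1_cont], rule conv) (use K1_nonneg in \<open>auto intro: win_F1\<close>)
lemma L2_F2: "L2sq F2 \<le> ennreal (6 + 27 * K1) * L2sq u"
  by (rule L2_window[OF F2_cont], rule conv) (use K1_nonneg in \<open>auto intro: win_F2\<close>)

lemma opT_deriv: "0 < x \<Longrightarrow> (opT \<nu> u has_real_derivative F1 x / x) (at x)"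
  by (rule has_field_derivative_transform_within_open[OF F0_deriv, of _ "{0<..}"]) (auto simp: opT_eq)

lemma euler_eq: "0 < x \<Longrightarrow> euler (opT \<nu> u) x = F1 x"
  unfolding euler_def using DERIV_imp_deriv[OF opT_deriv] by simp

lemma euler_deriv: "0 < x \<Longrightarrow> (euler (opT \<nu> u) has_real_derivative F2 x / x) (at x)"
  by (rule has_field_derivative_transform_within_open[OF F1_deriv, of _ "{0<..}"]) (auto simp: euler_eq)

lemma euler2_eq: "0 < x \<Longrightarrow> euler (euler (opT \<nu> u)) x = F2 x"
  unfolding euler_def[of "euler (opT \<nu> u)"] using DERIV_imp_deriv[OF euler_deriv] by simp

end


theorem proposition5p1:
  fixes \<delta> :: real
  assumes "\<delta> > 0"
  shows "\<exists>C>0. \<forall>\<nu>::real. \<forall>u. \<nu> \<ge> 3/2 + \<delta> \<and> test_fun u \<longrightarrow>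
           (\<forall>x>0. opT \<nu> u differentiable at x \<and> euler (opT \<nu> u) differentiable at x) \<and>
           L2sq (opT \<nu> u) \<le> ennreal ((inverse (\<nu>\<^sup>2 - 9/4))\<^sup>2) * L2sq u \<and>
           L2sq (euler (opT \<nu> u)) \<le> ennreal ((inverse (\<nu> - 3/2))\<^sup>2) * L2sq u \<and>
           L2sq (euler (euler (opT \<nu> u))) \<le> ennreal (C\<^sup>2) * L2sq u"
proof -
  define C where "C = 3 + 6 / \<delta>"
  have "0 < 6 / \<delta>" using assms by simp
  then have Cpos: "C > 0" unfolding C_def by linarith
  show ?thesis
  proof (intro exI[of _ C] conjI[OF Cpos] allI impI)
    fix \<nu> :: real and u :: "real \<Rightarrow> real"
    assume H: "\<nu> \<ge> 3/2 + \<delta> \<and> test_fun u"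
    then have nuge: "\<nu> \<ge> 3/2 + \<delta>" and tf: "test_fun u" by auto
    from tf obtain a0 b0 where diff: "\<And>n x. 0 < x \<Longrightarrow> (deriv ^^ n) u differentiable at x"
      and a0: "0 < a0" "a0 \<le> b0" and supp: "\<And>x. x \<notin> {a0..b0} \<Longrightarrow> u x = 0"
      unfolding test_fun_def by blast
    have ucont: "isCont u x" for x
    proof (cases "0 < x")
      case True
      then have "u differentiable at x" using diff[of x 0] by simp
      then show ?thesis by (rule differentiable_imp_continuous_within)
    next
      case False
      have "eventually (\<lambda>z. z \<in> {..<a0}) (nhds x)"
        using False a0 by (intro eventually_nhds_in_open) auto
      then have "eventually (\<lambda>z. u z = (\<lambda>_. 0) z) (nhds x)"
        by eventually_elim (use supp in auto)
      then have "isCont u x = isCont (\<lambda>_. 0::real) x" by (rule isCont_cong)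
      then show ?thesis by simp
    qed
    interpret hsetup u \<nu> "a0/2" "b0+1"
    proof
      show "\<And>x. isCont u x" by (rule ucont)
      show "0 < a0/2" using a0 by simp
      show "a0/2 < b0+1" using a0 by simp
      show "\<And>y. y \<le> a0/2 \<Longrightarrow> u y = 0" using a0 supp by auto
      show "\<And>y. b0+1 \<le> y \<Longrightarrow> u y = 0" using a0 supp by auto
      show "3/2 < \<nu>" using nuge assms by simp
    qed
    have D: "\<forall>x>0. opT \<nu> u differentiable at x \<and> euler (opT \<nu> u) differentiable at x"
      using opT_deriv euler_deriv by (auto simp: real_differentiable_def)
    have L0: "L2sq (opT \<nu> u) \<le> ennreal ((inverse (\<nu>\<^sup>2 - 9/4))\<^sup>2) * L2sq u"
      using L2_F0 L2sq_cong[of "opT \<nu> u" F0] opT_eq by (simp add: K0_def)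
    have L1: "L2sq (euler (opT \<nu> u)) \<le> ennreal ((inverse (\<nu> - 3/2))\<^sup>2) * L2sq u"
      using L2_F1 L2sq_cong[of "euler (opT \<nu> u)" F1] euler_eq by (simp add: K1_def)
    have K: "6 + 27 * K1 \<le> C^2"
    proof -
      have "inverse (\<nu> - 3/2) \<le> inverse \<delta>"
        using nuge assms by (intro le_imp_inverse_le) auto
      then have "K1 \<le> (inverse \<delta>)^2" unfolding K1_def
        using nuge assms by (intro power_mono) auto
      then have k: "K1 \<le> inverse \<delta> * inverse \<delta>" by (simp add: power2_eq_square)
      have i0: "0 \<le> inverse \<delta>" using assms by simp
      have i2: "0 \<le> inverse \<delta> * inverse \<delta>" by simp
      have Ce: "C = 3 + 6 * inverse \<delta>" by (simp add: C_def inverse_eq_divide)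
      have C2: "C^2 = 9 + 36 * inverse \<delta> + 36 * (inverse \<delta> * inverse \<delta>)"
        unfolding Ce by (simp add: power2_eq_square algebra_simps)
      show ?thesis unfolding C2 using k i0 i2 by linarith
    qed
    have L2: "L2sq (euler (euler (opT \<nu> u))) \<le> ennreal (C\<^sup>2) * L2sq u"
    proof -
      have "L2sq (euler (euler (opT \<nu> u))) = L2sq F2"
        by (rule L2sq_cong) (rule euler2_eq)
      also have "\<dots> \<le> ennreal (6 + 27 * K1) * L2sq u" by (rule L2_F2)
      also have "\<dots> \<le> ennreal (C\<^sup>2) * L2sq u"
        by (intro mult_right_mono ennreal_leI K) auto
      finally show ?thesis .
    qed
    show "(\<forall>x>0. opT \<nu> u differentiable at x \<and> euler (opT \<nu> u) differentiable at x) \<and>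
           L2sq (opT \<nu> u) \<le> ennreal ((inverse (\<nu>\<^sup>2 - 9/4))\<^sup>2) * L2sq u \<and>
           L2sq (euler (opT \<nu> u)) \<le> ennreal ((inverse (\<nu> - 3/2))\<^sup>2) * L2sq u \<and>
           L2sq (euler (euler (opT \<nu> u))) \<le> ennreal (C\<^sup>2) * L2sq u"
      using D L0 L1 L2 by blast
  qed
qed


end
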